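(* In the setting described in the context, for all sufficiently large $y$ (in terms of $E$, $\gamma$ and $\delta$), there exists a subset of $\mathbf{D}_{\mathbf{P}}$ which can be partitioned into $\frac{2^{\vert\mathbf{P}\vert}}{2M}$ sets of $M$ elements each, each of these sets having logarithmic spread greater than $1$.
   Context: For a finite set $\mathbf{S}$ of positive integers, $\mathbf{D}_{\mathbf{S}}=\{d: d\mid\prod_{s\in\mathbf{S}}s\}$, and the logarithmic spread of $\mathbf{S}$ is $\min_{s_1\neq s_2}\vert\log s_1-\log s_2\vert$ over $s_1,s_2\in\mathbf{S}$. $P^+(n)$ denotes the largest prime factor of $n$. Setting: fix $E>0$ and $\gamma>0$ such that $\#\{p\leq x: P^+(p-1)\leq x^{1-E}\}\geq\frac{\gamma x}{\log x}$ for all sufficiently large $x$. Fix $\delta>0$ and put $\Delta=\delta^2/24$. Fix positive constants $C_5,C_6$ and, for each positive integer $x$, an integer $s_x\in[\sqrt{\log x},e^{\sqrt{\log x}}]$ such that $\sum_{q\leq x^{2/5},\,s_x\nmid q}\max_{2\leq z\leq x}\max_{(a,q)=1}\vert\pi(z;q,a)-\pi(z)/\phi(q)\vert\leq C_5x e^{-C_6\sqrt{\log x}}$ for all $x$. Let $M$ be a fixed power of two depending only on $\delta$ (in the paper, the smallest power of two greater than the integer $N$ supplied, for $m=2$ and this $\Delta$, by the Maynard-type theorem: for any admissible set of $N$ linear forms $d_in+c_i$ with positive integer coefficients and $d_i>c_i$, at least $x/(\log x)^N$ integers $n\in[x,2x)$ make at least $m$ of the forms prime). Let $y$ be a large real parameter,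 $\Upsilon=\lceil e^{y^{2+2\Delta}}\rceil$, $\kappa=\prod_{y/\log y\leq p\leq y,\ P^+(p-1)\leq y^{1-E}}p^2$, and let $p^*$ be the largest prime factor of $s_{2\Upsilon\kappa}$. Finally $\mathbf{P}=\{p\text{ prime}: \frac{y}{\log y}\leq p\leq y,\ P^+(p-1)\leq y^{1-E},\ p\neq p^*\}$. *)

theory Defs
  imports "HOL-Analysis.Analysis" "HOL-Number_Theory.Number_Theory" "HOL-Library.Disjoint_Sets"
begin

definition Pplus :: "nat \<Rightarrow> nat" where
  "Pplus n = (if n \<le> 1 then 1 else Max (prime_factors n))"

definition DS :: "nat set \<Rightarrow> nat set" where
  "DS S = {d. d dvd (\<Prod>s\<in>S. s)}"

(* "logarithmic spread of T is greater than c": the minimum of |log s1 - log s2|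
   over distinct s1, s2 in T exceeds c (vacuous if T has fewer than 2 elements) *)
definition log_spread_gt :: "nat set \<Rightarrow> real \<Rightarrow> bool" where
  "log_spread_gt T c \<longleftrightarrow> (\<forall>s1\<in>T. \<forall>s2\<in>T. s1 \<noteq> s2 \<longrightarrow> \<bar>ln (real s1) - ln (real s2)\<bar> > c)"

definition prime_pi :: "real \<Rightarrow> nat" where
  "prime_pi z = card {p::nat. prime p \<and> real p \<le> z}"

definition prime_pi_ap :: "real \<Rightarrow> nat \<Rightarrow> nat \<Rightarrow> nat" where
  "prime_pi_ap z q a = card {p::nat. prime p \<and> real p \<le> z \<and> [p = a] (mod q)}"

definition BV_err :: "nat \<Rightarrow> nat \<Rightarrow> real" where
  "BV_err x q = (SUP z\<in>{2..real x}. SUP a\<in>{a. a < q \<and> coprime a q}.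
      \<bar>real (prime_pi_ap z q a) - real (prime_pi z) / real (totient q)\<bar>)"

definition Pset :: "real \<Rightarrow> real \<Rightarrow> real \<Rightarrow> (nat \<Rightarrow> nat) \<Rightarrow> nat set" where
  "Pset E \<delta> y s =
    (let \<Delta> = \<delta>^2 / 24;
         \<Upsilon> = nat \<lceil>exp (y powr (2 + 2*\<Delta>))\<rceil>;
         Q = {p::nat. prime p \<and> y / ln y \<le> real p \<and> real p \<le> y \<and> real (Pplus (p - 1)) \<le> y powr (1 - E)};
         \<kappa> = (\<Prod>p\<in>Q. p^2);
         pstar = Pplus (s (2 * \<Upsilon> * \<kappa>))
     in Q - {pstar})"

end

theory Submission
  imports Defs "HOL-Real_Asymp.Real_Asymp"
begin

lemma prod_primes_dvd:
  fixes A :: "nat set"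
  assumes "finite A" "\<forall>p\<in>A. prime p \<and> p dvd x"
  shows "(\<Prod>A) dvd x"
  using assms
proof (induction A rule: finite_induct)
  case empty then show ?case by simp
next
  case (insert p A)
  have pp: "prime p" "p dvd x" using insert.prems by auto
  have IH: "\<Prod>A dvd x" using insert.IH insert.prems by blast
  have ndvd: "\<not> p dvd \<Prod>A"
  proof
    assume "p dvd \<Prod>A"
    then have "\<exists>q\<in>A. p dvd q" using prime_dvd_prod_iff[OF insert.hyps(1) pp(1), of "\<lambda>x. x"] by simp
    then obtain q where q: "q \<in> A" "p dvd q" by blast
    have "prime q" using q(1) insert.prems by blast
    then have "p = q" using primes_dvd_imp_eq[OF pp(1) _ q(2)] by blast
    then show False using q(1) insert.hyps(2) by blast
  qed
  have cop: "coprime p (\<Prod>A)" using prime_imp_coprime[OF pp(1) ndvd] .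
  have "p * \<Prod>A dvd x" using divides_mult[OF pp(2) IH cop] .
  then show ?case using insert.hyps by simp
qed

lemma binom_odd_le: "(2*m+1) choose m \<le> 4^m"
proof -
  have "(2*m+1) choose m = (2*m+1) choose (m+1)"
    using binomial_symmetric[of m "2*m+1"] by simp
  have "((2*m+1) choose m) + ((2*m+1) choose (m+1)) = (\<Sum>k\<in>{m,m+1}. (2*m+1) choose k)" by simp
  also have "\<dots> \<le> (\<Sum>k\<le>2*m+1. (2*m+1) choose k)" by (intro sum_mono2) auto
  also have "\<dots> = 2^(2*m+1)" by (rule choose_row_sum)
  finally have "2 * ((2*m+1) choose m) \<le> 2 * 4^m"
    using \<open>(2*m+1) choose m = (2*m+1) choose (m+1)\<close> by (simp add: power_mult)
  then show ?thesis by simp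
qed

lemma mid_primes_dvd: "(\<Prod>{p. prime p \<and> m+1 < p \<and> p \<le> 2*m+1}) dvd ((2*m+1) choose m)"
proof (rule prod_primes_dvd)
  show "finite {p. prime p \<and> m+1 < p \<and> p \<le> 2*m+1}" by simp
  show "\<forall>p\<in>{p. prime p \<and> m+1 < p \<and> p \<le> 2*m+1}. prime p \<and> p dvd ((2*m+1) choose m)"
  proof safe
    fix p assume p: "prime p" "m+1 < p" "p \<le> 2*m+1"
    have eq: "fact (2*m+1) = ((2*m+1) choose m) * (fact m * fact (m+1))"
      using binomial_fact_lemma[of m "2*m+1"] by (simp add: algebra_simps)
    have "p dvd fact (2*m+1)" using p by (intro dvd_fact) (auto dest: prime_gt_1_nat)
    moreover have "\<not> p dvd fact m * fact (m+1)"
      using p by (subst prime_dvd_mult_iff) (auto simp: prime_dvd_fact_iff simp del: fact_Suc)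
    ultimately show "p dvd ((2*m+1) choose m)" using p eq
      by (metis prime_dvd_mult_iff)
  qed
qed

lemma primorial_le: "(\<Prod>{p::nat. prime p \<and> p \<le> n}) \<le> 4^n"
proof (induction n rule: less_induct)
  case (less n)
  show ?case
  proof (cases "n \<le> 2")
    case True
    then have "n = 0 \<or> n = 1 \<or> n = 2" by auto
    moreover have "{p::nat. prime p \<and> p \<le> 0} = {}" "{p::nat. prime p \<and> p \<le> 1} = {}"
      by (auto dest: prime_gt_1_nat)
    moreover have "{p::nat. prime p \<and> p \<le> 2} = {2}" by (auto dest: prime_gt_1_nat simp: le_Suc_eq)
    ultimately show ?thesis
    proof (elim disjE conjE)
      assume "n = 0" "{p::nat. prime p \<and> p \<le> 0} = {}"
      then have "{p::nat. prime p \<and> p \<le> n} = {}" by simp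
      then show ?thesis by (simp only: prod.empty) simp
    next
      assume "n = 1" "{p::nat. prime p \<and> p \<le> 1} = {}"
      then have "{p::nat. prime p \<and> p \<le> n} = {}" by simp
      then show ?thesis by (simp only: prod.empty) simp
    next
      assume "n = 2" "{p::nat. prime p \<and> p \<le> 2} = {2}"
      then show ?thesis by simp
    qed
  next
    case False
    show ?thesis
    proof (cases "even n")
      case True
      have np: "\<not> prime n" using True False prime_odd_nat[of n] by auto
      have "prime p \<and> p \<le> n \<longleftrightarrow> prime p \<and> p \<le> n - 1" for p
        using np by (cases "p = n") auto
      then have "{p::nat. prime p \<and> p \<le> n} = {p. prime p \<and> p \<le> n - 1}" by blast
      then have "(\<Prod>{p::nat. prime p \<and> p \<le> n}) \<le> 4^(n-1)" using less[of "n-1"] False by simp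
      also have "\<dots> \<le> 4^n" by (intro power_increasing) auto
      finally show ?thesis .
    next
      case odd: False
      then obtain m where n: "n = 2*m+1" by (metis oddE)
      have split: "{p::nat. prime p \<and> p \<le> n} = {p. prime p \<and> p \<le> m+1} \<union> {p. prime p \<and> m+1 < p \<and> p \<le> 2*m+1}"
        using n by auto
      have "(\<Prod>{p::nat. prime p \<and> p \<le> n}) = (\<Prod>{p. prime p \<and> p \<le> m+1}) * (\<Prod>{p. prime p \<and> m+1 < p \<and> p \<le> 2*m+1})"
        unfolding split by (subst prod.union_disjoint) auto
      also have "\<dots> \<le> 4^(m+1) * 4^m"
      proof (intro mult_le_mono)
        show "(\<Prod>{p. prime p \<and> p \<le> m+1}) \<le> 4^(m+1)" using less[of "m+1"] n False by simp
        have "(\<Prod>{p. prime p \<and> m+1 < p \<and> p \<le> 2*m+1}) \<le> (2*m+1) choose m"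
          using mid_primes_dvd[of m] by (intro dvd_imp_le) (auto simp: zero_less_binomial_iff)
        then show "(\<Prod>{p. prime p \<and> m+1 < p \<and> p \<le> 2*m+1}) \<le> 4^m" using binom_odd_le[of m] by linarith
      qed
      also have "\<dots> = 4^n" using n by (simp add: power_add[symmetric])
      finally show ?thesis .
    qed
  qed
qed

lemma pi_bound:
  fixes z :: real assumes z: "z > 1"
  shows "real (card {p::nat. prime p \<and> real p \<le> z}) \<le> sqrt z + 1 + 2 * ln 4 * z / ln z"
proof -
  define A where "A = {p::nat. prime p \<and> real p \<le> z}"
  define A1 where "A1 = {p\<in>A. real p \<le> sqrt z}"
  define A2 where "A2 = {p\<in>A. sqrt z < real p}"
  have iff: "real p \<le> z \<longleftrightarrow> p \<le> nat \<lfloor>z\<rfloor>" for p :: nat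
  proof
    assume "real p \<le> z" then show "p \<le> nat \<lfloor>z\<rfloor>" by (rule le_nat_floor)
  next
    assume "p \<le> nat \<lfloor>z\<rfloor>"
    then have "real p \<le> real (nat \<lfloor>z\<rfloor>)" by simp
    also have "\<dots> \<le> z" using z by simp
    finally show "real p \<le> z" .
  qed
  have Aeq: "A = {p. prime p \<and> p \<le> nat \<lfloor>z\<rfloor>}" unfolding A_def using iff by blast
  have finA: "finite A" unfolding Aeq by simp
  have AU: "A = A1 \<union> A2" "A1 \<inter> A2 = {}" unfolding A1_def A2_def by auto
  have cA: "card A = card A1 + card A2" using finA unfolding AU(1)
    by (intro card_Un_disjoint) (use AU in auto)
  have "A1 \<subseteq> {0..nat \<lfloor>sqrt z\<rfloor>}"
  proof
    fix p assume "p \<in> A1" then have "real p \<le> sqrt z" by (simp add: A1_def)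
    then have "p \<le> nat \<lfloor>sqrt z\<rfloor>" by (rule le_nat_floor)
    then show "p \<in> {0..nat \<lfloor>sqrt z\<rfloor>}" by simp
  qed
  from card_mono[OF finite_atLeastAtMost this] have "card A1 \<le> nat \<lfloor>sqrt z\<rfloor> + 1" by simp
  then have c1: "real (card A1) \<le> sqrt z + 1"
  proof -
    have "real (nat \<lfloor>sqrt z\<rfloor>) \<le> sqrt z" using z by simp
    moreover have "real (card A1) \<le> real (nat \<lfloor>sqrt z\<rfloor>) + 1"
      using \<open>card A1 \<le> nat \<lfloor>sqrt z\<rfloor> + 1\<close> by (metis of_nat_1 of_nat_add of_nat_le_iff)
    ultimately show ?thesis by linarith
  qed
  have fin2: "finite A2" using finA unfolding A2_def by simp
  have "sqrt z ^ card A2 = (\<Prod>p\<in>A2. sqrt z)" by simp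
  also have "\<dots> \<le> (\<Prod>p\<in>A2. real p)"
  proof (rule prod_mono)
    fix p assume "p \<in> A2"
    then have "sqrt z < real p" by (simp add: A2_def)
    then show "0 \<le> sqrt z \<and> sqrt z \<le> real p" using z by simp
  qed
  also have "\<dots> = real (\<Prod>A2)" by simp
  finally have r1: "sqrt z ^ card A2 \<le> real (\<Prod>A2)" .
  have n1: "(\<Prod>A2) \<le> \<Prod>A"
  proof (rule dvd_imp_le)
    show "\<Prod>A2 dvd \<Prod>A" using finA by (intro prod_dvd_prod_subset) (auto simp: A2_def)
    show "0 < \<Prod>A" using finA by (intro prod_pos) (auto simp: A_def prime_gt_0_nat)
  qed
  have n2: "\<Prod>A \<le> 4 ^ nat \<lfloor>z\<rfloor>" unfolding Aeq by (rule primorial_le)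
  have r2: "real (\<Prod>A2) \<le> 4 ^ nat \<lfloor>z\<rfloor>"
    using n1 n2 by (metis le_trans of_nat_le_iff of_nat_numeral of_nat_power)
  have r3: "(4::real) ^ nat \<lfloor>z\<rfloor> = 4 powr (real (nat \<lfloor>z\<rfloor>))"
    by (rule powr_realpow[symmetric]) simp
  have r4: "(4::real) powr (real (nat \<lfloor>z\<rfloor>)) \<le> 4 powr z" using z by (intro powr_mono) auto
  have r5: "sqrt z ^ card A2 \<le> 4 powr z" using r1 r2 r3 r4 by linarith
  have sp: "sqrt z ^ card A2 > 0" using z by simp
  have "ln (sqrt z ^ card A2) \<le> ln (4 powr z)" using r5 sp by (subst ln_le_cancel_iff) auto
  moreover have "ln (sqrt z ^ card A2) = real (card A2) * (ln z / 2)"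
    using z by (simp add: ln_realpow ln_sqrt)
  moreover have "ln ((4::real) powr z) = z * ln 4" by (simp add: ln_powr)
  ultimately have l: "real (card A2) * ln z \<le> 2 * (z * ln 4)" by linarith
  have lz: "ln z > 0" using z by simp
  have c2: "real (card A2) \<le> 2 * ln 4 * z / ln z"
    using l lz by (simp add: pos_le_divide_eq algebra_simps)
  show ?thesis using c1 c2 cA unfolding A_def by simp
qed

lemma pi_small:
  fixes c :: real assumes c: "c > 0"
  shows "\<forall>\<^sub>F z in at_top. real (card {p::nat. prime p \<and> real p \<le> z}) \<le> c * z"
proof -
  have lim: "((\<lambda>z::real. (sqrt z + 1 + 2 * ln 4 * z / ln z) / z) \<longlongrightarrow> 0) at_top" by real_asymp
  have ev1: "\<forall>\<^sub>F z in at_top. (sqrt z + 1 + 2 * ln 4 * z / ln z) / z < c"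
    by (rule order_tendstoD(2)[OF lim c])
  have ev2: "\<forall>\<^sub>F z::real in at_top. z > 1" by (rule eventually_gt_at_top)
  show ?thesis using ev1 ev2
  proof eventually_elim
    case (elim z)
    then have "sqrt z + 1 + 2 * ln 4 * z / ln z < c * z"
      using pos_divide_less_eq[of z "sqrt z + 1 + 2 * ln 4 * z / ln z" c] by (simp add: mult.commute)
    then show ?case using pi_bound[of z] elim by linarith
  qed
qed

lemma prod_split_RQ:
  fixes X R Q :: "nat set"
  assumes "finite X" "X \<subseteq> R \<union> Q" "R \<inter> Q = {}"
  shows "\<Prod>X = (\<Prod>(X \<inter> R)) * (\<Prod>(X \<inter> Q))"
proof -
  have "X = (X \<inter> R) \<union> (X \<inter> Q)" using assms by auto
  then have "\<Prod>X = \<Prod>((X \<inter> R) \<union> (X \<inter> Q))" by simp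
  also have "\<dots> = (\<Prod>(X \<inter> R)) * (\<Prod>(X \<inter> Q))"
    using assms by (intro prod.union_disjoint) auto
  finally show ?thesis .
qed

lemma same_rank:
  fixes P Q R X1 X2 :: "nat set" and L y :: real and m :: nat
  assumes finP: "finite P" and QP: "Q \<subseteq> P" and cQ: "card Q = m" and R: "R = P - Q"
    and bnd: "\<forall>p\<in>P. L \<le> real p \<and> real p \<le> y" and L1: "L \<ge> 1"
    and hw: "\<forall>b<m. exp 1 * y^b < L^(b+1)"
    and X1: "X1 \<subseteq> P" and X2: "X2 \<subseteq> P" and eqR: "X1 \<inter> R = X2 \<inter> R"
    and le: "real (\<Prod>X1) \<le> exp 1 * real (\<Prod>X2)"
    and pos: "\<forall>p\<in>P. p > 0"
  shows "\<not> card (X2 \<inter> Q) < card (X1 \<inter> Q)"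
proof
  assume lt: "card (X2 \<inter> Q) < card (X1 \<inter> Q)"
  define a where "a = card (X1 \<inter> Q)"
  define b where "b = card (X2 \<inter> Q)"
  have finX1: "finite X1" "finite X2" using X1 X2 finP finite_subset by auto
  have am: "a \<le> m" unfolding a_def cQ[symmetric] using finP QP
    by (intro card_mono) (auto intro: finite_subset)
  have ba: "b < a" using lt a_def b_def by simp
  have split1: "\<Prod>X1 = (\<Prod>(X1 \<inter> R)) * (\<Prod>(X1 \<inter> Q))"
    using X1 R finX1 by (intro prod_split_RQ) auto
  have split2: "\<Prod>X2 = (\<Prod>(X1 \<inter> R)) * (\<Prod>(X2 \<inter> Q))"
    using X2 R finX1 eqR by (subst eqR) (intro prod_split_RQ, auto)
  have Apos: "real (\<Prod>(X1 \<inter> R)) > 0" using pos X1 finX1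
    by (auto intro!: prod_pos)
  from le have le': "real (\<Prod>(X1 \<inter> Q)) \<le> exp 1 * real (\<Prod>(X2 \<inter> Q))"
    unfolding split1 split2 of_nat_mult using Apos
    by (smt (verit, ccfv_SIG) mult.left_commute mult_le_cancel_left_pos)
  have "L ^ (b+1) \<le> L ^ a" using L1 ba by (intro power_increasing) auto
  also have "L ^ a = (\<Prod>p\<in>X1 \<inter> Q. L)" by (simp add: a_def)
  also have "\<dots> \<le> (\<Prod>p\<in>X1 \<inter> Q. real p)"
    using bnd X1 L1 by (intro prod_mono) auto
  also have "\<dots> = real (\<Prod>(X1 \<inter> Q))" by simp
  finally have g1: "L ^ (b+1) \<le> real (\<Prod>(X1 \<inter> Q))" .
  have "real (\<Prod>(X2 \<inter> Q)) = (\<Prod>p\<in>X2 \<inter> Q. real p)" by simp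
  also have "\<dots> \<le> (\<Prod>p\<in>X2 \<inter> Q. y)"
    using bnd X2 by (intro prod_mono) auto
  also have "\<dots> = y ^ b" by (simp add: b_def)
  finally have g2: "real (\<Prod>(X2 \<inter> Q)) \<le> y ^ b" .
  have "exp 1 * y^b < L^(b+1)" using hw ba am by auto
  then show False using g1 g2 le'
    by (smt (verit, best) exp_gt_zero mult_left_mono)
qed

lemma window:
  fixes P Q :: "nat set" and L y :: real and m :: nat and S :: "nat set set"
  assumes finP: "finite P" and QP: "Q \<subseteq> P" and cQ: "card Q = m"
    and bnd: "\<forall>p\<in>P. L \<le> real p \<and> real p \<le> y" and L1: "L \<ge> 1"
    and hw: "\<forall>b<m. exp 1 * y^b < L^(b+1)"
    and pos: "\<forall>p\<in>P. p > 0"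
    and SP: "S \<subseteq> Pow P"
    and win: "\<forall>X1\<in>S. \<forall>X2\<in>S. real (\<Prod>X1) \<le> exp 1 * real (\<Prod>X2)"
  shows "card S \<le> 2^(card P - m) * (m choose (m div 2))"
proof -
  define R where "R = P - Q"
  have finR: "finite R" using finP R_def by simp
  have cR: "card R = card P - m" unfolding R_def using finP QP cQ
    by (simp add: card_Diff_subset finite_subset)
  define SA where "SA = (\<lambda>A. {X\<in>S. X \<inter> R = A})"
  have Sun: "S = (\<Union>A\<in>Pow R. SA A)" unfolding SA_def using SP by auto
  have finS: "finite S" using SP finP by (meson finite_Pow_iff finite_subset)
  have each: "card (SA A) \<le> m choose (m div 2)" for A
  proof (cases "SA A = {}")
    case True then show ?thesis by simp
  next
    case False
    then obtain X0 where X0: "X0 \<in> SA A" by auto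
    define r where "r = card (X0 \<inter> Q)"
    have inj: "inj_on (\<lambda>X. X \<inter> Q) (SA A)"
    proof (rule inj_onI)
      fix X Y assume XY: "X \<in> SA A" "Y \<in> SA A" "X \<inter> Q = Y \<inter> Q"
      have "X = (X \<inter> R) \<union> (X \<inter> Q)" "Y = (Y \<inter> R) \<union> (Y \<inter> Q)"
        using XY SP unfolding SA_def R_def by auto
      then show "X = Y" using XY unfolding SA_def by auto
    qed
    have img: "(\<lambda>X. X \<inter> Q) ` SA A \<subseteq> {B. B \<subseteq> Q \<and> card B = r}"
    proof safe
      fix X assume X: "X \<in> SA A"
      have XP: "X \<subseteq> P" "X0 \<subseteq> P" using X X0 SP unfolding SA_def by auto
      have eqR: "X \<inter> R = X0 \<inter> R" using X X0 unfolding SA_def by auto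
      have w1: "real (\<Prod>X) \<le> exp 1 * real (\<Prod>X0)" "real (\<Prod>X0) \<le> exp 1 * real (\<Prod>X)"
        using win X X0 unfolding SA_def by auto
      have "\<not> card (X0 \<inter> Q) < card (X \<inter> Q)"
        using same_rank[OF finP QP cQ R_def bnd L1 hw XP(1) XP(2) eqR w1(1) pos] .
      moreover have "\<not> card (X \<inter> Q) < card (X0 \<inter> Q)"
        using same_rank[OF finP QP cQ R_def bnd L1 hw XP(2) XP(1) eqR[symmetric] w1(2) pos] .
      ultimately show "card (X \<inter> Q) = r" unfolding r_def by simp
    qed
    have finQ: "finite Q" using finP QP finite_subset by auto
    have "card (SA A) = card ((\<lambda>X. X \<inter> Q) ` SA A)" using inj by (simp add: card_image)
    also have "\<dots> \<le> card {B. B \<subseteq> Q \<and> card B = r}"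
      using img finQ by (intro card_mono) auto
    also have "\<dots> = m choose r" using finQ cQ by (simp add: n_subsets)
    also have "\<dots> \<le> m choose (m div 2)" by (rule binomial_maximum)
    finally show ?thesis .
  qed
  have "card S \<le> (\<Sum>A\<in>Pow R. card (SA A))"
    by (subst Sun) (rule card_UN_le, simp add: finR)
  also have "\<dots> \<le> (\<Sum>A\<in>Pow R. m choose (m div 2))" by (intro sum_mono each)
  also have "\<dots> = 2^(card P - m) * (m choose (m div 2))" using finR cR by (simp add: card_Pow)
  finally show ?thesis .
qed

lemma comb:
  fixes P :: "nat set" and L y :: real and m M h :: nat
  assumes finP: "finite P" and primes: "\<forall>p\<in>P. prime p"
    and bnd: "\<forall>p\<in>P. L \<le> real p \<and> real p \<le> y"
    and L1: "L \<ge> 1" and mP: "m \<le> card P" and hw: "\<forall>b<m. exp 1 * y^b < L^(b+1)"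
    and M1: "M \<ge> 1" and hM: "h * (2*M) = 2^card P"
    and hb: "2^(card P - m) * (m choose (m div 2)) \<le> h"
  shows "\<exists>S F. S \<subseteq> DS P \<and> partition_on S F \<and> card F = h \<and>
            (\<forall>T\<in>F. card T = M \<and> log_spread_gt T 1)"
proof -
  define n where "n = card P"
  define N :: nat where "N = 2^n"
  have pos: "\<forall>p\<in>P. p > 0" using primes prime_gt_0_nat by blast
  have dvd_iff: "p dvd \<Prod>X \<longleftrightarrow> p \<in> X" if X: "X \<subseteq> P" and p: "p \<in> P" for X p
  proof
    have finX: "finite X" using X finP finite_subset by blast
    assume "p dvd \<Prod>X"
    then have "\<exists>q\<in>X. p dvd q"
      using prime_dvd_prod_iff[OF finX, of p "\<lambda>x. x"] primes p by simp
    then obtain q where q: "q \<in> X" "p dvd q" by blast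
    have "prime p" "prime q" using primes p q(1) X by auto
    then have "p = q" using primes_dvd_imp_eq q(2) by blast
    then show "p \<in> X" using q by simp
  next
    have finX: "finite X" using X finP finite_subset by blast
    assume pX: "p \<in> X" show "p dvd \<Prod>X" using dvd_prodI[OF finX pX, of "\<lambda>x. x"] by simp
  qed
  have inj: "inj_on (\<lambda>X. \<Prod>X) (Pow P)"
  proof (rule inj_onI)
    fix X Y assume XY: "X \<in> Pow P" "Y \<in> Pow P" "\<Prod>X = \<Prod>Y"
    have "p \<in> X \<longleftrightarrow> p \<in> Y" for p
    proof (cases "p \<in> P")
      case True
      then show ?thesis using dvd_iff[of X p] dvd_iff[of Y p] XY by auto
    next
      case False then show ?thesis using XY by auto
    qed
    then show "X = Y" by blast
  qed
  define D where "D = (\<lambda>X. \<Prod>X) ` Pow P"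
  have finD: "finite D" unfolding D_def using finP by simp
  have cardD: "card D = N" unfolding D_def N_def n_def using inj finP
    by (simp add: card_image card_Pow)
  have DDS: "D \<subseteq> DS P" unfolding D_def DS_def using finP
    by (auto intro: prod_dvd_prod_subset)
  have Dpos: "\<forall>x\<in>D. x > 0" unfolding D_def using pos finP
    by (auto intro!: prod_pos dest: finite_subset)
  define xs where "xs = sorted_list_of_set D"
  define d where "d = (\<lambda>i. xs ! i)"
  have lxs: "length xs = N" unfolding xs_def using cardD by simp
  have sxs: "sorted_wrt (<) xs" unfolding xs_def by simp
  have setxs: "set xs = D" unfolding xs_def using finD by simp
  have dmono: "d i < d j" if "i < j" "j < N" for i j
    unfolding d_def using sorted_wrt_nth_less[OF sxs that(1)] that lxs by simp
  have dmono': "d i \<le> d j" if "i \<le> j" "j < N" for i j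
    using dmono[of i j] that by (cases "i = j") auto
  have dD: "d i \<in> D" if "i < N" for i
    unfolding d_def using that lxs setxs nth_mem by metis
  have dinj: "i = j" if "i < N" "j < N" "d i = d j" for i j
    using dmono[of i j] dmono[of j i] that by (cases i j rule: linorder_cases) auto
  have dpos: "real (d i) > 0" if "i < N" for i using dD[OF that] Dpos by auto
  obtain Q where QP: "Q \<subseteq> P" and cQ: "card Q = m"
    using obtain_subset_with_card_n[OF mP] by blast
  have key: "real (d (i+h)) > exp 1 * real (d i)" if ih: "i + h < N" for i
  proof (rule ccontr)
    assume "\<not> ?thesis"
    then have le: "real (d (i+h)) \<le> exp 1 * real (d i)" by simp
    define I where "I = {i..i+h}"
    define S where "S = {X\<in>Pow P. \<Prod>X \<in> d ` I}"
    have win: "\<forall>X1\<in>S. \<forall>X2\<in>S. real (\<Prod>X1) \<le> exp 1 * real (\<Prod>X2)"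
    proof (intro ballI)
      fix X1 X2 assume X: "X1 \<in> S" "X2 \<in> S"
      then obtain a b where ab: "a \<in> I" "b \<in> I" "\<Prod>X1 = d a" "\<Prod>X2 = d b"
        unfolding S_def by auto
      have "real (d a) \<le> real (d (i+h))" using ab ih dmono'[of a "i+h"] unfolding I_def by auto
      also have "\<dots> \<le> exp 1 * real (d i)" by (rule le)
      also have "\<dots> \<le> exp 1 * real (d b)" using ab ih dmono'[of i b] unfolding I_def by auto
      finally show "real (\<Prod>X1) \<le> exp 1 * real (\<Prod>X2)" using ab by simp
    qed
    have img: "(\<lambda>X. \<Prod>X) ` S = d ` I"
    proof
      show "(\<lambda>X. \<Prod>X) ` S \<subseteq> d ` I" unfolding S_def by auto
      show "d ` I \<subseteq> (\<lambda>X. \<Prod>X) ` S"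
      proof
        fix x assume "x \<in> d ` I"
        then obtain a where a: "a \<in> I" "x = d a" by auto
        have "a < N" using a ih unfolding I_def by auto
        then have "x \<in> D" using dD a by simp
        then obtain X where X: "X \<in> Pow P" "x = \<Prod>X" unfolding D_def by auto
        have "\<Prod>X \<in> d ` I" using a X(2) by (metis image_eqI)
        then have "X \<in> S" unfolding S_def using X(1) by auto
        then show "x \<in> (\<lambda>X. \<Prod>X) ` S" using X(2) by (rule rev_image_eqI)
      qed
    qed
    have injd: "inj_on d I"
      by (rule inj_onI) (use dinj ih in \<open>auto simp: I_def\<close>)
    have "card S = card ((\<lambda>X. \<Prod>X) ` S)"
      by (rule card_image[symmetric]) (rule inj_on_subset[OF inj], auto simp: S_def)
    also have "\<dots> = card I" unfolding img using injd by (simp add: card_image)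
    also have "\<dots> = h + 1" unfolding I_def by simp
    finally have cS: "card S = h + 1" .
    have "card S \<le> 2^(card P - m) * (m choose (m div 2))"
      by (rule window[OF finP QP cQ bnd L1 hw pos _ win]) (auto simp: S_def)
    then show False using cS hb by simp
  qed
  have hpos: "h > 0" using hM by (cases h) auto
  have idx: "r + j*h < N" if "r < h" "j < M" for r j
  proof -
    have "r + j*h < h + j*h" using that by simp
    also have "\<dots> = (j+1)*h" by simp
    also have "\<dots> \<le> M*h" using that by (intro mult_right_mono) auto
    also have "\<dots> < N"
    proof -
      have "M*h > 0" using hpos M1 by simp
      then have "M*h < M*h + M*h" by simp
      also have "\<dots> = N" using hM unfolding N_def n_def by (simp add: algebra_simps)
      finally show ?thesis .
    qed
    finally show ?thesis .
  qed
  define T where "T = (\<lambda>r. (\<lambda>j. d (r + j*h)) ` {..<M})"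
  define F where "F = T ` {..<h}"
  define S where "S = \<Union>F"
  have same: "r = r'" if rh: "r < h" "r' < h" "x \<in> T r" "x \<in> T r'" for r r' x
  proof -
    obtain j where j: "j < M" "x = d (r + j*h)" using rh(3) unfolding T_def by auto
    obtain j' where j': "j' < M" "x = d (r' + j'*h)" using rh(4) unfolding T_def by auto
    note jj = j(1) j'(1) j(2) j'(2)
    have "r + j*h = r' + j'*h" using dinj[OF idx[OF rh(1) jj(1)] idx[OF rh(2) jj(2)]] jj by simp
    then have "(r + j*h) mod h = (r' + j'*h) mod h" by simp
    then show "r = r'" using rh by simp
  qed
  have r0: "d r \<in> T r" for r unfolding T_def using M1 by (auto intro!: image_eqI[where x=0])
  have part: "partition_on S F"
    unfolding partition_on_def
  proof (intro conjI)
    show "\<Union>F = S" unfolding S_def ..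
    show "disjoint F"
      unfolding disjoint_def
    proof (intro ballI impI)
      fix A B assume AB: "A \<in> F" "B \<in> F" "A \<noteq> B"
      obtain r where r: "r < h" "A = T r" using AB(1) unfolding F_def by auto
      obtain r' where r': "r' < h" "B = T r'" using AB(2) unfolding F_def by auto
      show "A \<inter> B = {}"
      proof (rule ccontr)
        assume "A \<inter> B \<noteq> {}"
        then obtain x where "x \<in> T r" "x \<in> T r'" using r r' by auto
        then have "r = r'" using same r r' by blast
        then show False using AB r r' by simp
      qed
    qed
    show "{} \<notin> F" unfolding F_def using r0 by auto
  qed
  have cF: "card F = h"
  proof -
    have "inj_on T {..<h}"
    proof (rule inj_onI)
      fix a b assume ab: "a \<in> {..<h}" "b \<in> {..<h}" "T a = T b"
      have "d a \<in> T a" "d a \<in> T b" using r0[of a] ab(3) by auto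
      then show "a = b" using same[of a b "d a"] ab by auto
    qed
    then show ?thesis unfolding F_def by (simp add: card_image)
  qed
  have SDS: "S \<subseteq> DS P"
    unfolding S_def F_def T_def using dD idx DDS by blast
  have cT: "card (T r) = M" if "r < h" for r
  proof -
    have "inj_on (\<lambda>j. d (r + j*h)) {..<M}"
    proof (rule inj_onI)
      fix j j' assume jj: "j \<in> {..<M}" "j' \<in> {..<M}" "d (r + j*h) = d (r + j'*h)"
      have "r + j*h < N" "r + j'*h < N" using idx that jj by auto
      then have "r + j*h = r + j'*h" using dinj jj(3) by blast
      then show "j = j'" using hpos by simp
    qed
    then show ?thesis unfolding T_def by (simp add: card_image)
  qed
  have gap: "ln (real (d (r + j'*h))) - ln (real (d (r + j*h))) > 1"
    if "r < h" "j < j'" "j' < M" for r j j'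
  proof -
    have i1: "r + j*h + h < N" using idx[of r "j+1"] that by (simp add: algebra_simps)
    have "exp 1 * real (d (r + j*h)) < real (d (r + j*h + h))" using key[OF i1] .
    also have "\<dots> \<le> real (d (r + j'*h))"
    proof -
      have "r + j*h + h \<le> r + j'*h" using that
        by (metis Suc_leI add.assoc mult_Suc mult_le_mono1 nat_add_left_cancel_le add.commute)
      then show ?thesis using dmono' idx that by auto
    qed
    finally have lt: "exp 1 * real (d (r + j*h)) < real (d (r + j'*h))" .
    have p1: "real (d (r + j*h)) > 0" using dpos idx that by auto
    have "ln (exp 1 * real (d (r + j*h))) < ln (real (d (r + j'*h)))"
    proof (subst ln_less_cancel_iff)
      show "0 < exp 1 * real (d (r + j*h))" using p1 by simp
      then show "0 < real (d (r + j'*h))" using lt by linarith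
      show "exp 1 * real (d (r + j*h)) < real (d (r + j'*h))" by (rule lt)
    qed
    moreover have "ln (exp 1 * real (d (r + j*h))) = 1 + ln (real (d (r + j*h)))"
      using p1 by (simp add: ln_mult)
    ultimately show ?thesis by simp
  qed
  have spread: "log_spread_gt (T r) 1" if rh: "r < h" for r
    unfolding log_spread_gt_def
  proof (intro ballI impI)
    fix s1 s2 assume s: "s1 \<in> T r" "s2 \<in> T r" "s1 \<noteq> s2"
    obtain j where j: "j < M" "s1 = d (r + j*h)" using s(1) unfolding T_def by auto
    obtain j' where j': "j' < M" "s2 = d (r + j'*h)" using s(2) unfolding T_def by auto
    note jj = j(1) j'(1) j(2) j'(2)
    have "j \<noteq> j'" using s jj by auto
    then consider "j < j'" | "j' < j" by linarith
    then show "\<bar>ln (real s1) - ln (real s2)\<bar> > 1"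
    proof cases
      case 1 then show ?thesis using gap[OF rh 1 jj(2)] jj by simp
    next
      case 2 then show ?thesis using gap[OF rh 2 jj(1)] jj by simp
    qed
  qed
  show ?thesis
  proof (intro exI conjI)
    show "S \<subseteq> DS P" by (rule SDS)
    show "partition_on S F" by (rule part)
    show "card F = h" by (rule cF)
    show "\<forall>T\<in>F. card T = M \<and> log_spread_gt T 1"
      unfolding F_def using cT spread by auto
  qed
qed

lemma central_step: "(j+1) * ((2*j+2) choose (j+1)) = 2*(2*j+1) * ((2*j) choose j)"
proof -
  have e1: "Suc (2*j+1) = 2*j+2" "Suc (2*j) = 2*j+1" "Suc j = j+1" by simp_all
  have a: "(j+1) * ((2*j+2) choose (j+1)) = (2*j+2) * ((2*j+1) choose j)"
    using Suc_times_binomial[of j "2*j+1"] unfolding e1 .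
  have sym: "(2*j+1) choose j = (2*j+1) choose (j+1)"
    using binomial_symmetric[of j "2*j+1"] by simp
  have b: "(j+1) * ((2*j+1) choose (j+1)) = (2*j+1) * ((2*j) choose j)"
    using Suc_times_binomial[of j "2*j"] unfolding e1 .
  have "(j+1) * ((j+1) * ((2*j+2) choose (j+1))) = (j+1) * ((2*j+2) * ((2*j+1) choose j))"
    unfolding a ..
  also have "\<dots> = (2*j+2) * ((j+1) * ((2*j+1) choose (j+1)))" unfolding sym by (simp only: ac_simps)
  also have "\<dots> = (2*j+2) * ((2*j+1) * ((2*j) choose j))" unfolding b ..
  also have "\<dots> = (j+1) * (2*(2*j+1) * ((2*j) choose j))" by (simp only: ac_simps) (simp only: algebra_simps)
  finally have fin: "(j+1) * ((j+1) * ((2*j+2) choose (j+1))) = (j+1) * (2*(2*j+1) * ((2*j) choose j))" .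
  have nz: "(j+1::nat) \<noteq> 0" by simp
  show ?thesis using fin mult_left_cancel[OF nz] by blast
qed

lemma central_binom_sq: "((2*j) choose j)^2 * (2*j+1) \<le> 16^j"
proof (induction j)
  case 0 then show ?case by simp
next
  case (Suc j)
  define c where "c = (2*j) choose j"
  define c' where "c' = (2*j+2) choose (j+1)"
  have st: "(j+1) * c' = 2*(2*j+1) * c" unfolding c_def c'_def by (rule central_step)
  have IH: "c^2 * (2*j+1) \<le> 16^j" using Suc.IH c_def by simp
  have ineq: "(2*j+1) * (2*j+3) \<le> 4 * (j+1)^2" by (simp add: power2_eq_square algebra_simps)
  have "(j+1)^2 * (c'^2 * (2*j+3)) = ((j+1) * c')^2 * (2*j+3)" by (simp only: power_mult_distrib mult.assoc)
  also have "\<dots> = (2*(2*j+1) * c)^2 * (2*j+3)" unfolding st ..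
  also have "\<dots> = 4 * (c^2 * (2*j+1)) * ((2*j+1) * (2*j+3))"
    by (simp only: power_mult_distrib power2_eq_square ac_simps)
  also have "\<dots> \<le> 4 * 16^j * (4 * (j+1)^2)"
    by (rule mult_le_mono[OF mult_le_mono2[OF IH] ineq])
  also have "\<dots> = (j+1)^2 * 16^(Suc j)" by simp
  finally have "(j+1)^2 * (c'^2 * (2*j+3)) \<le> (j+1)^2 * 16^(Suc j)" .
  then have "0 < (j+1)^2 \<longrightarrow> c'^2 * (2*j+3) \<le> 16^(Suc j)" by (simp only: mult_le_cancel1)
  moreover have "(0::nat) < (j+1)^2" by simp
  ultimately have "c'^2 * (2*j+3) \<le> 16^(Suc j)" by blast
  moreover have e: "2 * Suc j = 2*j+2" "2 * Suc j + 1 = 2*j+3" "Suc j = j+1" by simp_all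
  ultimately show ?case unfolding c'_def by (simp only: e)
qed

lemma binom_M:
  fixes M :: nat assumes "M \<ge> 1"
  shows "((4*M^2) choose ((4*M^2) div 2)) * (2*M) \<le> 2^(4*M^2)"
proof -
  define j where "j = 2*M^2"
  have m: "4*M^2 = 2*j" "(4*M^2) div 2 = j" unfolding j_def by auto
  define c where "c = (2*j) choose j"
  have "(c * (2*M))^2 = c^2 * (4*M^2)" by (simp add: power_mult_distrib)
  also have "\<dots> \<le> c^2 * (2*j+1)" unfolding j_def by simp
  also have "\<dots> \<le> 16^j" unfolding c_def by (rule central_binom_sq)
  also have "\<dots> = (2^(2*j))^2"
  proof -
    have "(2::nat)^(4*j) = (2^4)^j" by (rule power_mult)
    moreover have "((2::nat)^(2*j))^2 = 2^(2*j*2)" by (rule power_mult[symmetric])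
    moreover have "2*j*2 = 4*j" by simp
    ultimately show ?thesis by simp
  qed
  finally have "c * (2*M) \<le> 2^(2*j)" by (rule power2_le_imp_le) simp
  then show ?thesis unfolding m(2) unfolding m(1) c_def .
qed

lemma finite_bounded_nat: "finite {p::nat. Q p \<and> real p \<le> z}"
proof (rule finite_subset[of _ "{..nat \<lfloor>z\<rfloor>}"])
  show "{p::nat. Q p \<and> real p \<le> z} \<subseteq> {..nat \<lfloor>z\<rfloor>}" using le_nat_floor by auto
qed simp

theorem lemma2:
  fixes E \<gamma> \<delta> :: real and M :: nat
  assumes E_pos: "E > 0" and gamma_pos: "\<gamma> > 0" and delta_pos: "\<delta> > 0"
    and hypE: "\<forall>\<^sub>F x in at_top.
        real (card {p::nat. prime p \<and> real p \<le> x \<and> real (Pplus (p - 1)) \<le> x powr (1 - E)})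
          \<ge> \<gamma> * x / ln x"
    and M_pow2: "\<exists>k. M = 2 ^ k"
  shows "\<exists>Y. \<forall>C5 C6 :: real. \<forall>s :: nat \<Rightarrow> nat.
           C5 > 0 \<longrightarrow> C6 > 0 \<longrightarrow>
           (\<forall>x::nat. x \<ge> 1 \<longrightarrow> sqrt (ln (real x)) \<le> real (s x) \<and> real (s x) \<le> exp (sqrt (ln (real x)))) \<longrightarrow>
           (\<forall>x::nat. x \<ge> 1 \<longrightarrow>
              (\<Sum>q\<in>{q::nat. 1 \<le> q \<and> real q \<le> real x powr (2/5) \<and> \<not> s x dvd q}. BV_err x q)
                \<le> C5 * real x * exp (- C6 * sqrt (ln (real x)))) \<longrightarrow>
           (\<forall>y::real. y \<ge> Y \<longrightarrow>
              (\<exists>S F. S \<subseteq> DS (Pset E \<delta> y s) \<and> partition_on S F \<and>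
                 real (card F) = 2 ^ card (Pset E \<delta> y s) / (2 * real M) \<and>
                 (\<forall>T\<in>F. card T = M \<and> log_spread_gt T 1)))"
proof -
  obtain k where k: "M = 2^k" using M_pow2 by blast
  have M1: "M \<ge> 1" using k by simp
  define m where "m = 4*M^2"
  have Cm: "(m choose (m div 2)) * (2*M) \<le> 2^m" unfolding m_def by (rule binom_M[OF M1])
  have km: "k + 1 \<le> m"
  proof -
    have lt: "k < 2^k" by (rule less_exp)
    have "k + 1 \<le> M" unfolding k using lt by linarith
    also have "M \<le> M * M" using M1 by simp
    also have "\<dots> \<le> m" unfolding m_def by (simp add: power2_eq_square)
    finally show ?thesis .
  qed
  define Qy where "Qy = (\<lambda>y::real. {p::nat. prime p \<and> y / ln y \<le> real p \<and> real p \<le> y \<and>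
                             real (Pplus (p - 1)) \<le> y powr (1 - E)})"
  define G where "G = (\<lambda>x::real. {p::nat. prime p \<and> real p \<le> x \<and> real (Pplus (p - 1)) \<le> x powr (1 - E)})"
  define Pi where "Pi = (\<lambda>z::real. {p::nat. prime p \<and> real p \<le> z})"
  have finQ: "finite (Qy y)" for y
    using finite_bounded_nat[of "\<lambda>p. prime p \<and> y / ln y \<le> real p \<and> real (Pplus (p - 1)) \<le> y powr (1 - E)" y]
    unfolding Qy_def by (simp add: conj_ac)
  have finPi: "finite (Pi z)" for z
    using finite_bounded_nat[of "\<lambda>p. prime p" z] unfolding Pi_def .
  have lim1: "filterlim (\<lambda>y::real. y / ln y) at_top at_top" by real_asymp
  have evA: "\<forall>\<^sub>F y::real in at_top. real (card (Pi (y / ln y))) \<le> \<gamma>/2 * (y / ln y)"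
    unfolding Pi_def using eventually_compose_filterlim[OF pi_small[of "\<gamma>/2"] lim1] gamma_pos by simp
  have evB: "\<forall>\<^sub>F y::real in at_top. 2 * (real m + 1) / \<gamma> + 1 \<le> y / ln y"
    using lim1 unfolding filterlim_at_top by blast
  have evC0: "((\<lambda>y::real. (ln y)^m / exp (ln y)) \<longlongrightarrow> 0) at_top"
    using filterlim_compose[OF tendsto_power_div_exp_0 ln_at_top] by simp
  have pe: "0 < 1 / exp (1::real)" by simp
  have evC1: "\<forall>\<^sub>F y::real in at_top. (ln y)^m / exp (ln y) < 1 / exp 1"
    using order_tendstoD(2)[OF evC0 pe] .
  have evD: "\<forall>\<^sub>F y::real in at_top. exp 1 \<le> y" by (rule eventually_ge_at_top)
  have evH: "\<forall>\<^sub>F y::real in at_top. \<gamma> * y / ln y \<le> real (card (G y))"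
    using hypE unfolding G_def by simp
  have ev: "\<forall>\<^sub>F y::real in at_top. real m + 1 \<le> real (card (Qy y)) \<and> 1 \<le> y / ln y \<and>
               (\<forall>b<m. exp 1 * y^b < (y / ln y)^(b+1))"
    using evA evB evC1 evD evH
  proof eventually_elim
    case (elim y)
    have ypos: "y > 0" using elim(4) by (smt (verit) exp_gt_zero)
    have lny: "ln y \<ge> 1" using elim(4) ypos by (metis ln_exp ln_le_cancel_iff exp_gt_zero)
    have sub: "G y \<subseteq> Qy y \<union> Pi (y / ln y)" unfolding G_def Qy_def Pi_def by auto
    have "card (G y) \<le> card (Qy y \<union> Pi (y / ln y))"
      by (rule card_mono[OF _ sub]) (simp add: finQ finPi)
    also have "\<dots> \<le> card (Qy y) + card (Pi (y / ln y))" by (rule card_Un_le)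
    finally have "real (card (G y)) \<le> real (card (Qy y)) + real (card (Pi (y / ln y)))"
      by (metis of_nat_add of_nat_le_iff)
    then have q1: "\<gamma>/2 * (y / ln y) \<le> real (card (Qy y))"
      using elim(1) elim(5) by (simp add: field_simps)
    have "real m + 1 \<le> \<gamma>/2 * (2 * (real m + 1) / \<gamma> + 1)" using gamma_pos
      by (simp add: field_simps)
    also have "\<dots> \<le> \<gamma>/2 * (y / ln y)" using elim(2) gamma_pos by (intro mult_left_mono) auto
    finally have c1: "real m + 1 \<le> real (card (Qy y))" using q1 by linarith
    have c2: "1 \<le> y / ln y" using elim(2) gamma_pos
      by (smt (verit) divide_nonneg_nonneg of_nat_0_le_iff)
    have ely: "exp 1 * (ln y)^m < y"
    proof -
      have "(ln y)^m / y < 1 / exp 1" using elim(3) ypos by simp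
      then show ?thesis using ypos by (simp add: field_simps)
    qed
    have c3: "\<forall>b<m. exp 1 * y^b < (y / ln y)^(b+1)"
    proof (intro allI impI)
      fix b assume b: "b < m"
      have "(ln y)^(b+1) \<le> (ln y)^m" using lny b by (intro power_increasing) auto
      then have "exp 1 * (ln y)^(b+1) < y" using ely by (smt (verit) exp_gt_zero mult_left_mono)
      then have "exp 1 * (ln y)^(b+1) * y^b < y * y^b" using ypos by (intro mult_strict_right_mono) auto
      then have "exp 1 * y^b * (ln y)^(b+1) < y^(b+1)" by (simp add: algebra_simps)
      moreover have "(ln y)^(b+1) > 0" using lny by simp
      ultimately show "exp 1 * y^b < (y / ln y)^(b+1)"
        by (simp add: power_divide pos_less_divide_eq)
    qed
    show ?case using c1 c2 c3 by blast
  qed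
  then obtain Y where Y: "\<And>y. y \<ge> Y \<Longrightarrow> real m + 1 \<le> real (card (Qy y)) \<and> 1 \<le> y / ln y \<and>
               (\<forall>b<m. exp 1 * y^b < (y / ln y)^(b+1))"
    unfolding eventually_at_top_linorder by blast
  have main: "\<exists>S F. S \<subseteq> DS (Pset E \<delta> y s) \<and> partition_on S F \<and>
                 real (card F) = 2 ^ card (Pset E \<delta> y s) / (2 * real M) \<and>
                 (\<forall>T\<in>F. card T = M \<and> log_spread_gt T 1)" if y: "Y \<le> y" for s :: "nat \<Rightarrow> nat" and y :: real
  proof -
    define PP where "PP = Pset E \<delta> y s"
    obtain ps where PPeq: "PP = Qy y - {ps}"
      unfolding PP_def Pset_def Qy_def Let_def by blast
    have Yy: "real m + 1 \<le> real (card (Qy y))" "1 \<le> y / ln y"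
      "\<forall>b<m. exp 1 * y^b < (y / ln y)^(b+1)" using Y[OF y] by auto
    have finPP: "finite PP" using PPeq finQ by simp
    have "card (Qy y) \<le> card PP + 1"
      unfolding PPeq using finQ[of y] by (simp add: card_Diff_singleton_if) arith
    then have mP: "m \<le> card PP" using Yy(1) by linarith
    define n where "n = card PP"
    have kn: "k + 1 \<le> n" using km mP n_def by simp
    define h :: nat where "h = 2^(n - (k+1))"
    have hM: "h * (2*M) = 2^card PP"
    proof -
      have "h * (2*M) = 2^(n - (k+1)) * 2^(k+1)" unfolding h_def k by simp
      also have "\<dots> = 2^(n - (k+1) + (k+1))" by (rule power_add[symmetric])
      also have "(2::nat)^(n - (k+1) + (k+1)) = 2^n" using kn by simp
      finally show ?thesis unfolding n_def .
    qed
    have hb: "2^(card PP - m) * (m choose (m div 2)) \<le> h"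
    proof -
      have "2^(n - m) * (m choose (m div 2)) * (2*M) \<le> 2^(n-m) * 2^m"
        using Cm by (simp add: mult.assoc)
      also have "\<dots> = 2^(n - m + m)" by (rule power_add[symmetric])
      also have "(2::nat)^(n - m + m) = 2^n" using mP n_def by simp
      also have "\<dots> = h * (2*M)" using hM n_def by simp
      finally have "2^(n - m) * (m choose (m div 2)) * (2*M) \<le> h * (2*M)" .
      then show ?thesis unfolding n_def using M1 by simp
    qed
    have primes: "\<forall>p\<in>PP. prime p" and bnd: "\<forall>p\<in>PP. y / ln y \<le> real p \<and> real p \<le> y"
      unfolding PPeq Qy_def by auto
    obtain S F where SF: "S \<subseteq> DS PP" "partition_on S F" "card F = h"
        "\<forall>T\<in>F. card T = M \<and> log_spread_gt T 1"
      using comb[OF finPP primes bnd Yy(2) mP Yy(3) M1 hM hb] by blast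
    have "real (card F) = 2 ^ card PP / (2 * real M)"
    proof -
      have "real h * (2 * real M) = 2 ^ card PP" using hM by (metis of_nat_mult of_nat_numeral of_nat_power)
      then show ?thesis using SF(3) M1 by (simp add: field_simps)
    qed
    then show "\<exists>S F. S \<subseteq> DS (Pset E \<delta> y s) \<and> partition_on S F \<and>
                 real (card F) = 2 ^ card (Pset E \<delta> y s) / (2 * real M) \<and>
                 (\<forall>T\<in>F. card T = M \<and> log_spread_gt T 1)"
      using SF unfolding PP_def by blast
  qed
  show ?thesis by (rule exI[of _ Y]) (use main in blast)
qed

end
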